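(* Let $(A,n_1,\ldots,n_r)$ be an excessively clusterizable A-configuration. Then there exist nonnegative integers $m_1,\ldots,m_r$ such that $m_i=0$ whenever $n_i=0$, $m_1+\cdots+m_r=|A|$, and $(A,m_1,\ldots,m_r)$ is a simply excessively clusterizable A-configuration.
   Context: Setting: $\Phi$ a simply laced root system of rank $r$ with positive roots $\Phi^+$, simple roots $\alpha_1,\ldots,\alpha_r$, scalar product normalized so $(\alpha,\alpha)=2$. $\mathrm{supp}\,v$ for $v=\sum a_j\alpha_j$ is $\{\alpha_j:a_j\ne0\}$. For $A\subseteq\Phi^+$ and $I\subseteq\{1,\ldots,r\}$, $R_I(A)$ is the set of $\alpha\in A$ whose support contains some $\alpha_j$, $j\in I$. An A-configuration is $(A,n_1,\ldots,n_r)$ with $A\subseteq\Phi^+$, $n_j\in\mathbb Z_{\ge0}$, $\sum n_j=|A|$. A set $A\subseteq\Phi^+$ is an $I$-cluster if: (1) coefficients of $\alpha_j$, $j\in I$, in elements of $A$ are $\le1$; (2) $(\alpha,\beta)\ne-1$ for distinct $\alpha,\beta\in A$; (3) if $\alpha,\beta\in A$, $(\alpha,\beta)=0$, then $\mathrm{supp}\,\alpha\cap\mathrm{supp}\,\beta$ contains no $\alpha_j$ with $j\in I$. With $I=\{j:n_j>0\}$, $(A,n)$ is excessive if $|R_I(A)|=\sum n_j$ and $|R_J(A)|>\sum_{j\in J}n_j$ for all nonempty $J\subsetneq I$; it is an excessive cluster if moreover $A$ is an $I$-cluster; it is a simple excessive cluster if it is an excessive cluster and $|I|=1$. Excessively clusterizable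 (recursively on $|A|$): $(\varnothing,0,\ldots,0)$ is; for $|A|>0$, $(A,n)$ is if there is nonempty $I$ with $n_j>0$ for $j\in I$ such that, with $k_j=n_j$ ($j\in I$), $k_j=0$ otherwise, $|R_I(A)|=\sum k_j$, $(R_I(A),k)$ is an excessive cluster and $(A\setminus R_I(A),n-k)$ is excessively clusterizable. Simply excessively clusterizable (recursively on $|A|$): $(\varnothing,0,\ldots,0)$ is; for $|A|>0$, $(A,n)$ is if there is an index $i$ with $n_i>0$ such that, with $k_i=n_i$ and $k_j=0$ for $j\ne i$, $|R_{\{i\}}(A)|=n_i$, $(R_{\{i\}}(A),k)$ is a simple excessive cluster, and $(A\setminus R_{\{i\}}(A),n-k)$ is simply excessively clusterizable. *)

theory Defs
  imports Complex_Main
begin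

text \<open>Simply laced root system of rank r, given by its Cartan matrix C on indices 1..r
  (symmetric, diagonal 2, off-diagonal entries 0 or -1, positive definite).
  Elements of the root lattice are coefficient vectors w.r.t. the simple roots,
  i.e. functions nat => int (only indices 1..r matter).\<close>

definition simply_laced_cartan :: "nat \<Rightarrow> (nat \<Rightarrow> nat \<Rightarrow> int) \<Rightarrow> bool" where
  "simply_laced_cartan r C \<longleftrightarrow>
     (\<forall>i\<in>{1..r}. C i i = 2) \<and>
     (\<forall>i\<in>{1..r}. \<forall>j\<in>{1..r}. C i j = C j i) \<and>
     (\<forall>i\<in>{1..r}. \<forall>j\<in>{1..r}. i \<noteq> j \<longrightarrow> C i j \<in> {0, -1}) \<and>
     (\<forall>x :: nat \<Rightarrow> real. (\<exists>i\<in>{1..r}. x i \<noteq> 0) \<longrightarrow>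
        (\<Sum>i\<in>{1..r}. \<Sum>j\<in>{1..r}. x i * of_int (C i j) * x j) > 0)"

definition ip :: "nat \<Rightarrow> (nat \<Rightarrow> nat \<Rightarrow> int) \<Rightarrow> (nat \<Rightarrow> int) \<Rightarrow> (nat \<Rightarrow> int) \<Rightarrow> int" where
  "ip r C u v = (\<Sum>i\<in>{1..r}. \<Sum>j\<in>{1..r}. u i * C i j * v j)"

definition simple_root :: "nat \<Rightarrow> nat \<Rightarrow> int" where
  "simple_root i = (\<lambda>j. if j = i then 1 else 0)"

definition refl :: "nat \<Rightarrow> (nat \<Rightarrow> nat \<Rightarrow> int) \<Rightarrow> nat \<Rightarrow> (nat \<Rightarrow> int) \<Rightarrow> (nat \<Rightarrow> int)" where
  "refl r C i v = (\<lambda>j. v j - ip r C v (simple_root i) * simple_root i j)"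

inductive_set roots :: "nat \<Rightarrow> (nat \<Rightarrow> nat \<Rightarrow> int) \<Rightarrow> (nat \<Rightarrow> int) set"
  for r C where
  simple: "i \<in> {1..r} \<Longrightarrow> simple_root i \<in> roots r C"
| reflect: "v \<in> roots r C \<Longrightarrow> i \<in> {1..r} \<Longrightarrow> refl r C i v \<in> roots r C"

definition pos_roots :: "nat \<Rightarrow> (nat \<Rightarrow> nat \<Rightarrow> int) \<Rightarrow> (nat \<Rightarrow> int) set" where
  "pos_roots r C = {v \<in> roots r C. \<forall>j. v j \<ge> 0}"

definition supp :: "nat \<Rightarrow> (nat \<Rightarrow> int) \<Rightarrow> nat set" where
  "supp r v = {j \<in> {1..r}. v j \<noteq> 0}"

definition R :: "nat \<Rightarrow> nat set \<Rightarrow> (nat \<Rightarrow> int) set \<Rightarrow> (nat \<Rightarrow> int) set" where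
  "R r I A = {\<alpha> \<in> A. \<exists>j\<in>I. j \<in> supp r \<alpha>}"

definition is_cluster :: "nat \<Rightarrow> (nat \<Rightarrow> nat \<Rightarrow> int) \<Rightarrow> nat set \<Rightarrow> (nat \<Rightarrow> int) set \<Rightarrow> bool" where
  "is_cluster r C I A \<longleftrightarrow>
     (\<forall>\<alpha>\<in>A. \<forall>j\<in>I. \<alpha> j \<le> 1) \<and>
     (\<forall>\<alpha>\<in>A. \<forall>\<beta>\<in>A. \<alpha> \<noteq> \<beta> \<longrightarrow> ip r C \<alpha> \<beta> \<noteq> -1) \<and>
     (\<forall>\<alpha>\<in>A. \<forall>\<beta>\<in>A. ip r C \<alpha> \<beta> = 0 \<longrightarrow> (\<forall>j\<in>I. j \<notin> supp r \<alpha> \<inter> supp r \<beta>))"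

definition excessive :: "nat \<Rightarrow> (nat \<Rightarrow> int) set \<Rightarrow> (nat \<Rightarrow> nat) \<Rightarrow> bool" where
  "excessive r A n \<longleftrightarrow>
     (let I = {j\<in>{1..r}. n j > 0} in
       card (R r I A) = (\<Sum>j\<in>{1..r}. n j) \<and>
       (\<forall>J. J \<noteq> {} \<and> J \<subset> I \<longrightarrow> card (R r J A) > (\<Sum>j\<in>J. n j)))"

definition excessive_cluster :: "nat \<Rightarrow> (nat \<Rightarrow> nat \<Rightarrow> int) \<Rightarrow> (nat \<Rightarrow> int) set \<Rightarrow> (nat \<Rightarrow> nat) \<Rightarrow> bool" where
  "excessive_cluster r C A n \<longleftrightarrow>
     excessive r A n \<and> is_cluster r C {j\<in>{1..r}. n j > 0} A"

definition simple_excessive_cluster :: "nat \<Rightarrow> (nat \<Rightarrow> nat \<Rightarrow> int) \<Rightarrow> (nat \<Rightarrow> int) set \<Rightarrow> (nat \<Rightarrow> nat) \<Rightarrow> bool" where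
  "simple_excessive_cluster r C A n \<longleftrightarrow>
     excessive_cluster r C A n \<and> card {j\<in>{1..r}. n j > 0} = 1"

inductive exc_clusterizable :: "nat \<Rightarrow> (nat \<Rightarrow> nat \<Rightarrow> int) \<Rightarrow> (nat \<Rightarrow> int) set \<Rightarrow> (nat \<Rightarrow> nat) \<Rightarrow> bool"
  for r C where
  empty: "(\<forall>j\<in>{1..r}. n j = 0) \<Longrightarrow> exc_clusterizable r C {} n"
| step: "\<lbrakk> A \<noteq> {}; I \<noteq> {}; I \<subseteq> {1..r}; \<forall>j\<in>I. n j > 0;
          k = (\<lambda>j. if j \<in> I then n j else 0);
          card (R r I A) = (\<Sum>j\<in>{1..r}. k j);
          excessive_cluster r C (R r I A) k;
          exc_clusterizable r C (A - R r I A) (\<lambda>j. n j - k j) \<rbrakk>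
        \<Longrightarrow> exc_clusterizable r C A n"

inductive simply_exc_clusterizable :: "nat \<Rightarrow> (nat \<Rightarrow> nat \<Rightarrow> int) \<Rightarrow> (nat \<Rightarrow> int) set \<Rightarrow> (nat \<Rightarrow> nat) \<Rightarrow> bool"
  for r C where
  empty: "(\<forall>j\<in>{1..r}. n j = 0) \<Longrightarrow> simply_exc_clusterizable r C {} n"
| step: "\<lbrakk> A \<noteq> {}; i \<in> {1..r}; n i > 0;
          k = (\<lambda>j. if j = i then n i else 0);
          card (R r {i} A) = n i;
          simple_excessive_cluster r C (R r {i} A) k;
          simply_exc_clusterizable r C (A - R r {i} A) (\<lambda>j. n j - k j) \<rbrakk>
        \<Longrightarrow> simply_exc_clusterizable r C A n"

definition A_configuration :: "nat \<Rightarrow> (nat \<Rightarrow> nat \<Rightarrow> int) \<Rightarrow> (nat \<Rightarrow> int) set \<Rightarrow> (nat \<Rightarrow> nat) \<Rightarrow> bool" where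
  "A_configuration r C A n \<longleftrightarrow> A \<subseteq> pos_roots r C \<and> (\<Sum>j\<in>{1..r}. n j) = card A"

end

theory Submission
  imports Defs
begin

lemma R_mono_sub: "R r I S \<subseteq> S" unfolding R_def by auto

lemma cluster_mono: "is_cluster r C I S \<Longrightarrow> T \<subseteq> S \<Longrightarrow> J \<subseteq> I \<Longrightarrow> is_cluster r C J T"
  unfolding is_cluster_def by blast

lemma peel:
  assumes "finite S" "\<forall>\<alpha>\<in>S. \<exists>j\<in>I. j \<in> supp r \<alpha>" "is_cluster r C I S" "I \<subseteq> {1..r}"
    "simply_exc_clusterizable r C D m'" "R r I D = {}" "S \<inter> D = {}" "\<forall>j\<in>I. m' j = 0"
  shows "\<exists>mS. (\<forall>j. (j \<notin> I \<or> R r {j} S = {}) \<longrightarrow> mS j = 0) \<and> (\<Sum>j\<in>{1..r}. mS j) = card S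
     \<and> simply_exc_clusterizable r C (S \<union> D) (\<lambda>j. m' j + mS j)"
  using assms
proof (induction "card S" arbitrary: S rule: less_induct)
  case less
  show ?case
  proof (cases "S = {}")
    case True
    then show ?thesis using less.prems(5) by (intro exI[of _ "\<lambda>_. 0"]) simp
  next
    case False
    then obtain \<alpha> where a: "\<alpha> \<in> S" by blast
    then obtain i where i: "i \<in> I" "i \<in> supp r \<alpha>" using less.prems(2) by blast
    define T where "T = R r {i} S"
    have TS: "T \<subseteq> S" unfolding T_def R_def by auto
    have aT: "\<alpha> \<in> T" unfolding T_def R_def using a i by auto
    have RD: "R r {i} D = {}" using less.prems(6) i unfolding R_def by auto
    have RSD: "R r {i} (S \<union> D) = T" unfolding T_def using RD unfolding R_def by auto
    define S' where "S' = S - T"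
    have finT: "finite T" using TS less.prems(1) finite_subset by blast
    have cT: "card T > 0" using finT aT by (auto simp: card_gt_0_iff)
    have lt: "card S' < card S"
    proof -
      have "S' \<subset> S" unfolding S'_def using TS aT a by blast
      then show ?thesis using less.prems(1) by (rule psubset_card_mono[rotated])
    qed
    have RS': "R r {i} S' = {}" unfolding S'_def T_def R_def by auto
    obtain mS' where m1: "\<forall>j. (j \<notin> I \<or> R r {j} S' = {}) \<longrightarrow> mS' j = 0"
      and m2: "(\<Sum>j\<in>{1..r}. mS' j) = card S'"
      and m3: "simply_exc_clusterizable r C (S' \<union> D) (\<lambda>j. m' j + mS' j)"
    proof -
      have f: "finite S'" using less.prems(1) unfolding S'_def by simp
      have s: "\<forall>\<alpha>\<in>S'. \<exists>j\<in>I. j \<in> supp r \<alpha>" using less.prems(2) unfolding S'_def by blast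
      have c: "is_cluster r C I S'" using cluster_mono[OF less.prems(3), of S' I] unfolding S'_def by blast
      have d: "S' \<inter> D = {}" using less.prems(7) unfolding S'_def by blast
      show ?thesis using less.hyps[OF lt f s c less.prems(4,5,6) d less.prems(8)] that by blast
    qed
    have mi: "mS' i = 0" using m1 RS' by blast
    have m'i: "m' i = 0" using less.prems(8) i by blast
    define mS where "mS = mS'(i := card T)"
    have ir: "i \<in> {1..r}" using i less.prems(4) by auto
    show ?thesis
    proof (intro exI[of _ mS] conjI)
      show "\<forall>j. (j \<notin> I \<or> R r {j} S = {}) \<longrightarrow> mS j = 0"
      proof (intro allI impI)
        fix j assume h: "j \<notin> I \<or> R r {j} S = {}"
        show "mS j = 0"
        proof (cases "j = i")
          case True then show ?thesis using h i aT unfolding T_def by auto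
        next
          case False
          have "R r {j} S' \<subseteq> R r {j} S" unfolding S'_def R_def by auto
          then show ?thesis using False h m1 unfolding mS_def by auto
        qed
      qed
      have "(\<Sum>j\<in>{1..r}. mS j) = (\<Sum>j\<in>{1..r}. mS' j) + card T"
      proof -
        have "(\<Sum>j\<in>{1..r}. mS j) = (\<Sum>j\<in>{1..r}. mS' j + (if j = i then card T else 0))"
          unfolding mS_def using mi by (intro sum.cong) auto
        also have "\<dots> = (\<Sum>j\<in>{1..r}. mS' j) + card T" using ir by (simp add: sum.distrib)
        finally show ?thesis .
      qed
      also have "\<dots> = card S" using m2 unfolding S'_def
        using card_Diff_subset[OF finT TS] card_mono[OF less.prems(1) TS] by simp
      finally show "(\<Sum>j\<in>{1..r}. mS j) = card S" .
      define n where "n = (\<lambda>j. m' j + mS j)"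
      define k where "k = (\<lambda>j. if j = i then n i else 0)"
      have ni: "n i = card T" unfolding n_def mS_def using m'i by simp
      have Ik: "{j\<in>{1..r}. k j > 0} = {i}" unfolding k_def using ir ni cT by auto
      have RT: "R r {i} T = T" unfolding T_def R_def by auto
      have sumk: "(\<Sum>j\<in>{1..r}. k j) = n i" unfolding k_def using ir by simp
      have exc: "simple_excessive_cluster r C (R r {i} (S \<union> D)) k"
        unfolding simple_excessive_cluster_def excessive_cluster_def excessive_def RSD Ik
        using RT sumk ni cluster_mono[OF less.prems(3) TS, of "{i}"] i by auto
      have eq1: "S \<union> D - R r {i} (S \<union> D) = S' \<union> D" unfolding RSD S'_def using less.prems(7) TS by auto
      have eq2: "(\<lambda>j. n j - k j) = (\<lambda>j. m' j + mS' j)"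
        unfolding n_def k_def mS_def using mi m'i by auto
      show "simply_exc_clusterizable r C (S \<union> D) (\<lambda>j. m' j + mS j)"
        unfolding n_def[symmetric]
      proof (rule simply_exc_clusterizable.step[where i=i and k=k])
        show "S \<union> D \<noteq> {}" using a by blast
        show "i \<in> {1..r}" by fact
        show "0 < n i" using ni cT by simp
        show "k = (\<lambda>j. if j = i then n i else 0)" by (fact k_def)
        show "card (R r {i} (S \<union> D)) = n i" using RSD ni by simp
        show "simple_excessive_cluster r C (R r {i} (S \<union> D)) k" by fact
        show "simply_exc_clusterizable r C (S \<union> D - R r {i} (S \<union> D)) (\<lambda>j. n j - k j)"
          unfolding eq1 eq2 by (fact m3)
      qed
    qed
  qed
qed

lemma main_aux:
  assumes "exc_clusterizable r C A n"
  shows "finite A \<and> (\<exists>m. (\<forall>i\<in>{1..r}. n i = 0 \<longrightarrow> m i = 0) \<and>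
           (\<Sum>i\<in>{1..r}. m i) = card A \<and> simply_exc_clusterizable r C A m)"
  using assms
proof (induction rule: exc_clusterizable.induct)
  case (empty n)
  then show ?case by (intro conjI exI[of _ n]) (auto intro: simply_exc_clusterizable.empty)
next
  case (step A I n k)
  define B where "B = R r I A"
  define D where "D = A - B"
  obtain m' where m1: "\<forall>i\<in>{1..r}. n i - k i = 0 \<longrightarrow> m' i = 0"
    and m2: "(\<Sum>i\<in>{1..r}. m' i) = card D" and m3: "simply_exc_clusterizable r C D m'"
    and finD: "finite D"
    using step.IH unfolding D_def B_def by auto
  have kpos: "(\<Sum>j\<in>{1..r}. k j) > 0"
  proof -
    obtain j where "j \<in> I" using step.hyps(2) by blast
    then have "j \<in> {1..r}" "k j > 0" using step.hyps(3,4,5) by auto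
    then have "k j \<le> (\<Sum>j\<in>{1..r}. k j)" by (intro member_le_sum) auto
    with \<open>k j > 0\<close> show ?thesis by linarith
  qed
  have finB: "finite B" using step.hyps(6) kpos unfolding B_def by (metis card.infinite less_irrefl)
  have Ik: "{j\<in>{1..r}. k j > 0} = I" using step.hyps(3,4,5) by auto
  have cl: "is_cluster r C I B" using step.hyps(7) Ik unfolding B_def excessive_cluster_def by simp
  have m'I: "\<forall>j\<in>I. m' j = 0" using m1 step.hyps(3,5) by auto
  have RD: "R r I D = {}" unfolding D_def B_def R_def by auto
  obtain mS where s1: "\<forall>j. (j \<notin> I \<or> R r {j} B = {}) \<longrightarrow> mS j = 0"
    and s2: "(\<Sum>j\<in>{1..r}. mS j) = card B"
    and s3: "simply_exc_clusterizable r C (B \<union> D) (\<lambda>j. m' j + mS j)"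
    using peel[OF finB _ cl step.hyps(3) m3 RD _ m'I] unfolding B_def D_def R_def by auto
  have AD: "A = B \<union> D" unfolding D_def B_def R_def by auto
  have finA: "finite A" using AD finB finD by simp
  show ?case
  proof (intro conjI exI[of _ "\<lambda>j. m' j + mS j"])
    show "finite A" by fact
    show "\<forall>i\<in>{1..r}. n i = 0 \<longrightarrow> m' i + mS i = 0"
    proof (intro ballI impI)
      fix i assume "i \<in> {1..r}" "n i = 0"
      then have "i \<notin> I" using step.hyps(4) by auto
      then show "m' i + mS i = 0" using m1 s1 \<open>i \<in> {1..r}\<close> \<open>n i = 0\<close> by auto
    qed
    have BA: "B \<subseteq> A" unfolding B_def R_def by auto
    have "card A = card B + card D" unfolding D_def using card_Diff_subset[OF finB BA] card_mono[OF finA BA] by simp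
    then show "(\<Sum>i\<in>{1..r}. m' i + mS i) = card A" using m2 s2 by (simp add: sum.distrib)
    show "simply_exc_clusterizable r C A (\<lambda>j. m' j + mS j)" using s3 AD by simp
  qed
qed

theorem mainTheorem11:
  fixes r :: nat and C :: "nat \<Rightarrow> nat \<Rightarrow> int"
    and A :: "(nat \<Rightarrow> int) set" and n :: "nat \<Rightarrow> nat"
  assumes "simply_laced_cartan r C"
    and "A_configuration r C A n"
    and "exc_clusterizable r C A n"
  shows "\<exists>m :: nat \<Rightarrow> nat. (\<forall>i\<in>{1..r}. n i = 0 \<longrightarrow> m i = 0) \<and>
           (\<Sum>i\<in>{1..r}. m i) = card A \<and>
           A_configuration r C A m \<and> simply_exc_clusterizable r C A m"
  using main_aux[OF assms(3)] assms(2) unfolding A_configuration_def by auto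

end
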